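(* Let $\mathcal H$ be a complex separable Hilbert space, let $\mathbb{D}=\{z\in\mathbb{C}:|z|<1\}$, and let $F:\mathbb{D}\to\mathcal B(\mathcal H)$ be a function (no regularity assumed) such that (1) for every $z\in\mathbb{D}$, the real part $\operatorname{Re}F(z)=\tfrac12\big(F(z)+F(z)^*\big)$ is a positive contraction, i.e. $0\le \operatorname{Re}F(z)\le I$; (2) the function $z\mapsto F(z)+zF(z)^*$ is holomorphic on $\mathbb{D}$. Then $F$ is constant.
   Context: $\mathcal B(\mathcal H)$ denotes the algebra of bounded linear operators on $\mathcal H$, and $T^*$ is the adjoint of $T$. For self-adjoint operators, $S\le T$ means $T-S$ is positive semidefinite. *)

theory Defs
  imports "HOL-Analysis.Analysis"
begin

text \<open>The distribution has no complex inner-product spaces, so a complex Hilbert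
space is rendered as a real Banach space type 'h together with a complex scalar
multiplication sc (extending scaleR) and a complex inner product ci
(conjugate-linear in the first argument) inducing the norm.\<close>

definition complex_hilbert ::
  "(complex \<Rightarrow> 'h::banach \<Rightarrow> 'h) \<Rightarrow> ('h \<Rightarrow> 'h \<Rightarrow> complex) \<Rightarrow> bool" where
  "complex_hilbert sc ci \<longleftrightarrow>
     (\<forall>r x. sc (complex_of_real r) x = r *\<^sub>R x) \<and>
     (\<forall>a x y. sc a (x + y) = sc a x + sc a y) \<and>
     (\<forall>a b x. sc (a + b) x = sc a x + sc b x) \<and>
     (\<forall>a b x. sc a (sc b x) = sc (a * b) x) \<and>
     (\<forall>x. sc 1 x = x) \<and>
     (\<forall>x y. ci x y = cnj (ci y x)) \<and>
     (\<forall>x y z. ci (x + y) z = ci x z + ci y z) \<and>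
     (\<forall>c x y. ci (sc c x) y = cnj c * ci x y) \<and>
     (\<forall>x. norm x = sqrt (Re (ci x x)))"

definition separable_type :: "'h::topological_space itself \<Rightarrow> bool" where
  "separable_type _ \<longleftrightarrow> (\<exists>D::'h set. countable D \<and> closure D = UNIV)"

definition bounded_op :: "(complex \<Rightarrow> 'h::real_normed_vector \<Rightarrow> 'h) \<Rightarrow> ('h \<Rightarrow> 'h) \<Rightarrow> bool" where
  "bounded_op sc T \<longleftrightarrow> bounded_linear T \<and> (\<forall>c x. T (sc c x) = sc c (T x))"

definition adjoint_op :: "('h \<Rightarrow> 'h \<Rightarrow> complex) \<Rightarrow> ('h \<Rightarrow> 'h) \<Rightarrow> ('h \<Rightarrow> 'h)" where
  "adjoint_op ci T = (THE S. \<forall>x y. ci (T x) y = ci x (S y))"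

definition positive_op :: "('h \<Rightarrow> 'h \<Rightarrow> complex) \<Rightarrow> ('h \<Rightarrow> 'h) \<Rightarrow> bool" where
  "positive_op ci A \<longleftrightarrow> (\<forall>x. ci x (A x) \<in> \<real> \<and> 0 \<le> Re (ci x (A x)))"

definition op_le :: "('h \<Rightarrow> 'h \<Rightarrow> complex) \<Rightarrow> ('h \<Rightarrow> 'h::ab_group_add) \<Rightarrow> ('h \<Rightarrow> 'h) \<Rightarrow> bool" where
  "op_le ci S T \<longleftrightarrow> positive_op ci (\<lambda>x. T x - S x)"

definition re_op :: "(complex \<Rightarrow> 'h \<Rightarrow> 'h::ab_group_add) \<Rightarrow> ('h \<Rightarrow> 'h \<Rightarrow> complex) \<Rightarrow> ('h \<Rightarrow> 'h) \<Rightarrow> ('h \<Rightarrow> 'h)" where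
  "re_op sc ci T = (\<lambda>x. sc (1/2) (T x + adjoint_op ci T x))"

definition op_holomorphic_on ::
  "(complex \<Rightarrow> 'h::real_normed_vector \<Rightarrow> 'h) \<Rightarrow> (complex \<Rightarrow> 'h \<Rightarrow> 'h) \<Rightarrow> complex set \<Rightarrow> bool" where
  "op_holomorphic_on sc G U \<longleftrightarrow>
     (\<forall>z\<in>U. \<exists>L. bounded_op sc L \<and>
        ((\<lambda>w. onorm (\<lambda>x. sc (inverse (w - z)) (G w x - G z x) - L x)) \<longlongrightarrow> 0) (at z))"

end

theory Submission
  imports Defs "HOL-Complex_Analysis.Complex_Analysis"
begin

lemma aux:
  fixes P X a Y M c :: real
  assumes "0 \<le> P" "P \<le> a * M" "P = X + a * Y" "a * Y \<le> a * c" "-(a * c) \<le> a * Y"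
  shows "\<bar>X\<bar> \<le> a * (M + c)"
  using assms unfolding distrib_left abs_le_iff by linarith

lemma scalar_const:
  fixes f g :: "complex \<Rightarrow> complex" and M :: real
  assumes holg: "g holomorphic_on ball 0 1"
    and gf: "\<And>z. z \<in> ball 0 1 \<Longrightarrow> g z = f z + z * cnj (f z)"
    and bd: "\<And>z. z \<in> ball 0 1 \<Longrightarrow> 0 \<le> Re (f z) \<and> Re (f z) \<le> M"
  shows "\<forall>z\<in>ball 0 1. f z = f 0"
proof -
  define g0 where "g0 = g 0"
  define q where "q = (\<lambda>z. if z = 0 then deriv g 0 else (g z - g 0) / (z - 0))"
  have holq: "q holomorphic_on ball 0 1"
    unfolding q_def by (rule pole_lemma[OF holg]) simp
  have gq: "g z = g0 + z * q z" for z
    by (simp add: q_def g0_def)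
  have M0: "0 \<le> M" using bd[of 0] by auto
  have fform: "f z = (g z - z * cnj (g z)) / (1 - (cmod z)^2)" if z: "z \<in> ball 0 1" for z
  proof -
    have n: "cmod z < 1" using z by simp
    have "(cmod z)^2 < 1" using n by (simp add: power_less_one_iff)
    hence ne: "complex_of_real (1 - (cmod z)^2) \<noteq> 0"
      by (simp only: of_real_eq_0_iff)
    have zz: "z * cnj z = complex_of_real ((cmod z)^2)" by (rule complex_norm_square[symmetric])
    have "g z - z * cnj (g z) = f z - (z * cnj z) * f z" using gf[OF z] by (simp add: algebra_simps)
    hence "g z - z * cnj (g z) = (1 - (cmod z)^2) * f z" using zz by (simp add: algebra_simps)
    thus ?thesis using ne by simp
  qed
  define ps where "ps = (\<lambda>r z. g z - complex_of_real (r^2) * q z - cnj g0 * z)"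
  have holps: "ps r holomorphic_on ball 0 1" for r
    unfolding ps_def by (intro holomorphic_intros holq holg)
  have bdps: "0 \<le> Re (ps r w) \<and> Re (ps r w) \<le> (1 - r^2) * M"
    if r: "0 < r" "r < 1" and w: "cmod w \<le> r" for r w
  proof -
    have bnd: "0 \<le> Re (ps r z) \<and> Re (ps r z) \<le> (1 - r^2) * M" if z: "cmod z = r" for z
    proof -
      have z0: "z \<noteq> 0" using z r by auto
      have zb: "z \<in> ball 0 1" using z r by simp
      have zz: "cnj z * z = complex_of_real (r^2)"
        using z complex_norm_square[of z] by (simp add: mult.commute)
      have "complex_of_real (r^2) * q z = (cnj z * z) * ((g z - g0) / z)"
        using z0 zz by (simp add: q_def g0_def)
      also have "\<dots> = cnj z * (g z - g0)" using z0 by simp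
      finally have "complex_of_real (r^2) * q z = cnj z * (g z - g0)" .
      hence "ps r z = g z - cnj z * g z + cnj z * g0 - cnj g0 * z"
        by (simp add: ps_def algebra_simps)
      hence "Re (ps r z) = Re (g z) - Re (cnj z * g z) + Re (cnj z * g0) - Re (cnj g0 * z)"
        by simp
      also have "Re (cnj z * g0) = Re (cnj g0 * z)" by simp
      finally have e: "Re (ps r z) = Re (g z - z * cnj (g z))" by simp
      have "g z - z * cnj (g z) = f z - (cnj z * z) * f z" using gf[OF zb] by (simp add: algebra_simps)
      hence "g z - z * cnj (g z) = f z - complex_of_real (r^2) * f z" unfolding zz .
      hence "g z - z * cnj (g z) = complex_of_real (1 - r^2) * f z" by (simp add: algebra_simps)
      hence "Re (ps r z) = (1 - r^2) * Re (f z)" using e by simp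
      moreover have "0 \<le> 1 - r^2" using r by (simp add: power_le_one)
      ultimately show ?thesis using bd[OF zb] mult_left_mono[of "Re (f z)" M "1 - r^2"]
        by (auto intro: mult_nonneg_nonneg)
    qed
    have sub: "cball 0 r \<subseteq> ball 0 1" using r by auto
    have hol': "ps r holomorphic_on interior (cball 0 r)"
      using holps by (rule holomorphic_on_subset) (use sub in auto)
    have cont': "continuous_on (closure (cball 0 r)) (ps r)"
      using holomorphic_on_imp_continuous_on[OF holps] sub by (auto intro: continuous_on_subset)
    have hol'': "(\<lambda>z. - ps r z) holomorphic_on interior (cball 0 r)"
      using hol' by (intro holomorphic_intros)
    have cont'': "continuous_on (closure (cball 0 r)) (\<lambda>z. - ps r z)"
      using cont' by (intro continuous_intros)
    have wc: "w \<in> cball 0 r" using w by simp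
    have up: "Re (ps r w) \<le> (1 - r^2) * M"
      apply (rule maximum_real_frontier[OF hol' cont' bounded_cball _ wc])
      using bnd by simp
    have lo: "Re (- ps r w) \<le> 0"
      apply (rule maximum_real_frontier[OF hol'' cont'' bounded_cball _ wc])
      using bnd by simp
    show ?thesis using up lo by simp
  qed
  define psi where "psi = (\<lambda>z. g z - q z - cnj g0 * z)"
  have psr: "ps r z = psi z + complex_of_real (1 - r^2) * q z" for r z
    by (simp add: ps_def psi_def algebra_simps)
  have Repsi: "Re (psi w) = 0" if w: "w \<in> ball 0 1" for w
  proof -
    define K where "K = M + cmod (q w)"
    have bb: "\<bar>Re (psi w)\<bar> \<le> (1 - r^2) * K" if r: "cmod w < r" "r < 1" for r
    proof -
      have r0: "0 < r" using r norm_ge_zero[of w] by linarith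
      have nn: "0 \<le> 1 - r^2" using r r0 by (simp add: power_le_one)
      have qq: "Re (q w) \<le> cmod (q w)" "- cmod (q w) \<le> Re (q w)"
        using abs_Re_le_cmod[of "q w"] by (simp_all add: abs_le_iff)
      have a1: "(1 - r^2) * Re (q w) \<le> (1 - r^2) * cmod (q w)"
        by (rule mult_left_mono[OF qq(1) nn])
      have a2: "-((1 - r^2) * cmod (q w)) \<le> (1 - r^2) * Re (q w)"
        using mult_left_mono[OF qq(2) nn] by simp
      have e: "Re (ps r w) = Re (psi w) + (1 - r^2) * Re (q w)" by (simp add: psr)
      have b: "0 \<le> Re (ps r w)" "Re (ps r w) \<le> (1 - r^2) * M"
        using bdps[OF r0 r(2)] r by simp_all
      show ?thesis unfolding K_def by (rule aux[OF b e a1 a2])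
    qed
    have wl: "cmod w < 1" using w by simp
    have ev: "eventually (\<lambda>r. \<bar>Re (psi w)\<bar> \<le> (1 - r^2) * K) (at_left (1::real))"
      using eventually_at_left_real[OF wl] by (rule eventually_mono) (auto intro: bb)
    have lim: "((\<lambda>r. (1 - r^2) * K) \<longlongrightarrow> (1 - 1^2) * K) (at_left (1::real))"
      by (intro tendsto_intros)
    have "\<bar>Re (psi w)\<bar> \<le> (1 - 1^2) * K"
      by (rule tendsto_le[OF trivial_limit_at_left_real lim tendsto_const ev])
    thus ?thesis by simp
  qed
  have holpsi: "psi holomorphic_on ball 0 1"
    unfolding psi_def by (intro holomorphic_intros holq holg)
  have cst: "psi constant_on ball 0 1"
  proof (rule ccontr)
    assume nc: "\<not> psi constant_on ball 0 1"
    have op: "open (psi ` ball 0 1)"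
      by (rule open_mapping_thm[OF holpsi open_ball connected_ball open_ball order_refl nc])
    have in0: "psi 0 \<in> psi ` ball 0 1" by simp
    then obtain e where e: "e > 0" "ball (psi 0) e \<subseteq> psi ` ball 0 1"
      using op openE in0 by metis
    have "psi 0 + complex_of_real (e/2) \<in> ball (psi 0) e" using e by (simp add: dist_norm)
    hence "psi 0 + complex_of_real (e/2) \<in> psi ` ball 0 1" using e(2) by (rule subsetD[rotated])
    then obtain u where u2: "psi 0 + complex_of_real (e/2) = psi u" and u: "u \<in> ball 0 1"
      by (rule imageE)
    have "Re (psi u) = Re (psi 0) + e/2" using u2[symmetric] by simp
    thus False using Repsi[OF u] Repsi[of 0] e by simp
  qed
  define c where "c = psi 0"
  obtain y where y: "\<forall>x\<in>ball 0 1. psi x = y" using cst unfolding constant_on_def by blast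
  have y0: "psi 0 = y" using y by simp
  have psic: "psi z = c" if "z \<in> ball 0 1" for z
    using y that y0 unfolding c_def by simp
  have Rec: "Re c = 0" using Repsi[of 0] by (simp add: c_def)
  have qeq: "q z * (z - 1) = c - g0 + cnj g0 * z" if z: "z \<in> ball 0 1" for z
  proof -
    have "g z - q z - cnj g0 * z = c" using psic[OF z] by (simp add: psi_def)
    hence "g0 + z * q z - q z - cnj g0 * z = c" unfolding gq[of z] .
    thus ?thesis by (simp add: algebra_simps)
  qed
  have Req: "0 \<le> Re (q w) \<and> Re (q w) \<le> M" if w: "w \<in> ball 0 1" for w
  proof -
    define r where "r = (1 + cmod w) / 2"
    have w0: "0 \<le> cmod w" by simp
    have w1: "cmod w < 1" using w by simp
    have ra: "0 < r" using w1 unfolding r_def by (simp add: add_pos_nonneg)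
    have rb: "r < 1" using w1 unfolding r_def by (simp add: field_simps)
    have rc: "cmod w \<le> r" using w1 unfolding r_def by (simp add: field_simps)
    note r = ra rb rc
    have pos: "0 < 1 - r^2" using r by (simp add: power_less_one_iff)
    have e: "Re (ps r w) = (1 - r^2) * Re (q w)" using psr[of r w] psic[OF w] Rec by simp
    have b: "0 \<le> Re (ps r w)" "Re (ps r w) \<le> (1 - r^2) * M" using bdps[OF r] by simp_all
    have "0 \<le> (1 - r^2) * Re (q w)" using e b by simp
    hence 1: "0 \<le> Re (q w)" using pos by (simp add: zero_le_mult_iff)
    have "(1 - r^2) * Re (q w) \<le> (1 - r^2) * M" using e b by simp
    hence 2: "Re (q w) \<le> M" using pos by simp
    show ?thesis using 1 2 by simp
  qed
  define d where "d = c - g0 + cnj g0"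
  have Red: "Re d = 0" using Rec by (simp add: d_def)
  have d0: "d = 0"
  proof -
    define t where "t = Im d"
    have dt: "d = \<i> * complex_of_real t" using Red by (simp add: t_def complex_eq_iff)
    have tb: "\<bar>t\<bar> \<le> 2 * s * (M + cmod g0)" if s: "0 < s" "s < 1" for s
    proof -
      define z where "z = Complex (1 - s) s"
      have "(cmod z)^2 = (1 - s)^2 + s^2" by (simp add: z_def cmod_power2)
      also have "\<dots> < 1" using s by (simp add: power2_eq_square algebra_simps)
      finally have "(cmod z)^2 < 1" .
      hence "cmod z < 1" by (simp add: power_less_one_iff)
      hence zb: "z \<in> ball 0 1" by simp
      have z1: "z - 1 \<noteq> 0" using s by (simp add: z_def complex_eq_iff)
      have "q z * (z - 1) = d + cnj g0 * (z - 1)" using qeq[OF zb] by (simp add: d_def algebra_simps)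
      hence "q z = (d + cnj g0 * (z - 1)) / (z - 1)" using z1 by (simp add: eq_divide_eq)
      hence "q z = cnj g0 + d / (z - 1)" using z1 by (simp add: add_divide_distrib)
      moreover have "Re (d / (z - 1)) = t / (2 * s)"
        using s by (simp add: dt z_def Re_divide power2_eq_square divide_simps)
      ultimately have "Re (q z) = Re g0 + t / (2 * s)" by simp
      moreover have "\<bar>Re g0\<bar> \<le> cmod g0" by (rule abs_Re_le_cmod)
      ultimately have "abs (t / (2 * s)) \<le> M + cmod g0" using Req[OF zb] by linarith
      hence "abs t / (2 * s) \<le> M + cmod g0" using s by (simp add: abs_divide)
      thus ?thesis using s by (simp add: divide_le_eq mult_ac)
    qed
    have ev: "eventually (\<lambda>s. \<bar>t\<bar> \<le> 2 * s * (M + cmod g0)) (at_right (0::real))"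
      using eventually_at_right_real[of 0 1] by (rule eventually_mono) (auto intro: tb)
    have lim: "((\<lambda>s. 2 * s * (M + cmod g0)) \<longlongrightarrow> 2 * 0 * (M + cmod g0)) (at_right (0::real))"
      by (intro tendsto_intros)
    have "\<bar>t\<bar> \<le> 2 * 0 * (M + cmod g0)"
      by (rule tendsto_le[OF trivial_limit_at_right_real lim tendsto_const ev])
    thus ?thesis using dt by simp
  qed
  have gform: "g z = g0 + cnj g0 * z" if z: "z \<in> ball 0 1" for z
  proof -
    have "c = d + g0 - cnj g0" by (simp add: d_def)
    hence cc: "c = g0 - cnj g0" using d0 by simp
    have "q z * (z - 1) = cnj g0 * (z - 1)" using qeq[OF z] unfolding cc by (simp add: algebra_simps)
    moreover have "z - 1 \<noteq> 0" using z by auto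
    ultimately have "q z = cnj g0" by simp
    thus ?thesis using gq[of z] by (simp add: mult.commute)
  qed
  show ?thesis
  proof
    fix z :: complex assume z: "z \<in> ball 0 1"
    have n: "(cmod z)^2 < 1" using z by (simp add: power_less_one_iff)
    hence ne: "complex_of_real (1 - (cmod z)^2) \<noteq> 0"
      by (simp only: of_real_eq_0_iff)
    have zz: "z * cnj z = complex_of_real ((cmod z)^2)" by (rule complex_norm_square[symmetric])
    have "g z - z * cnj (g z) = g0 - (z * cnj z) * g0" using gform[OF z] by (simp add: algebra_simps)
    hence "g z - z * cnj (g z) = (1 - (cmod z)^2) * g0" using zz by (simp add: algebra_simps)
    hence "f z = g0" using fform[OF z] ne by simp
    moreover have "f 0 = g0" using gf[of 0] by (simp add: g0_def)
    ultimately show "f z = f 0" by simp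
  qed
qed


locale chs =
  fixes sc :: "complex \<Rightarrow> 'h::banach \<Rightarrow> 'h" and ci :: "'h \<Rightarrow> 'h \<Rightarrow> complex"
  assumes H: "complex_hilbert sc ci"
begin

lemma sc_real: "sc (complex_of_real r) x = r *\<^sub>R x"
proof -
  have "\<forall>r x. sc (complex_of_real r) x = r *\<^sub>R x" using H unfolding complex_hilbert_def by (rule conjunct1)
  thus ?thesis by blast
qed
lemma sc_add_right: "sc a (x + y) = sc a x + sc a y" using H unfolding complex_hilbert_def by blast
lemma sc_add_left: "sc (a + b) x = sc a x + sc b x" using H unfolding complex_hilbert_def by blast
lemma sc_sc: "sc a (sc b x) = sc (a * b) x" using H unfolding complex_hilbert_def by blast
lemma sc_one: "sc 1 x = x" using H unfolding complex_hilbert_def by blast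
lemma ci_sym: "ci x y = cnj (ci y x)" using H unfolding complex_hilbert_def by blast
lemma ci_add_left: "ci (x + y) z = ci x z + ci y z" using H unfolding complex_hilbert_def by blast
lemma ci_sc_left: "ci (sc c x) y = cnj c * ci x y" using H unfolding complex_hilbert_def by blast
lemma norm_ci: "norm x = sqrt (Re (ci x x))" using H unfolding complex_hilbert_def by blast

lemma ci_add_right: "ci x (y + z) = ci x y + ci x z"
  by (subst ci_sym) (simp add: ci_add_left ci_sym[of y x] ci_sym[of z x])
lemma ci_sc_right: "ci x (sc c y) = c * ci x y"
  by (subst ci_sym) (simp add: ci_sc_left ci_sym[of y x])
lemma ci_zero_left: "ci 0 y = 0"
  using ci_add_left[of 0 0 y] by simp
lemma ci_zero_right: "ci x 0 = 0"
  using ci_add_right[of x 0 0] by simp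
lemma ci_neg_left: "ci (- x) y = - ci x y"
proof -
  have "ci x y + ci (-x) y = 0" using ci_add_left[of x "-x" y] by (simp add: ci_zero_left)
  thus ?thesis by (simp add: add_eq_0_iff)
qed
lemma ci_neg_right: "ci x (- y) = - ci x y"
proof -
  have "ci x y + ci x (-y) = 0" using ci_add_right[of x y "-y"] by (simp add: ci_zero_right)
  thus ?thesis by (simp add: add_eq_0_iff)
qed
lemma ci_diff_left: "ci (x - y) z = ci x z - ci y z"
  using ci_add_left[of x "-y" z] by (simp add: ci_neg_left)
lemma ci_diff_right: "ci x (y - z) = ci x y - ci x z"
  using ci_add_right[of x y "-z"] by (simp add: ci_neg_right)
lemma ci_scaleR_left: "ci (r *\<^sub>R x) y = complex_of_real r * ci x y"
  using ci_sc_left[of "complex_of_real r" x y] by (simp add: sc_real)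
lemma ci_scaleR_right: "ci x (r *\<^sub>R y) = complex_of_real r * ci x y"
  using ci_sc_right[of x "complex_of_real r" y] by (simp add: sc_real)

lemma ci_self: "ci x x = complex_of_real ((norm x)^2)"
proof -
  have "Im (ci x x) = Im (cnj (ci x x))" using ci_sym[of x x] by simp
  hence im: "Im (ci x x) = 0" by simp
  have "0 \<le> sqrt (Re (ci x x))" by (subst norm_ci[symmetric]) simp
  hence re: "0 \<le> Re (ci x x)" by simp
  have "(norm x)^2 = Re (ci x x)" using norm_ci[of x] re by simp
  thus ?thesis using im by (simp add: complex_eq_iff)
qed

lemma ci_self_Re: "Re (ci x x) = (norm x)^2" by (simp add: ci_self)

lemma ci_self_eq0: "ci x x = 0 \<Longrightarrow> x = 0"
  by (simp add: ci_self)

lemma ci_ext: assumes "\<And>x. ci x u = ci x v" shows "u = v"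
proof -
  have "ci (u - v) (u - v) = 0" using assms[of "u - v"] by (simp add: ci_diff_right)
  thus ?thesis using ci_self_eq0[of "u - v"] by simp
qed

lemma sc_zero_right: "sc c 0 = 0"
  using sc_add_right[of c 0 0] by simp
lemma sc_zero_left: "sc 0 x = 0"
  using sc_real[of 0 x] by simp
lemma sc_neg_right: "sc c (- x) = - sc c x"
proof -
  have "sc c x + sc c (-x) = 0" using sc_add_right[of c x "-x"] by (simp add: sc_zero_right)
  thus ?thesis by (simp add: add_eq_0_iff)
qed
lemma sc_diff_right: "sc c (x - y) = sc c x - sc c y"
  using sc_add_right[of c x "-y"] by (simp add: sc_neg_right)
lemma sc_scaleR: "sc c (r *\<^sub>R x) = r *\<^sub>R sc c x"
proof -
  have "sc c (r *\<^sub>R x) = sc c (sc (complex_of_real r) x)" by (simp add: sc_real)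
  also have "\<dots> = sc (complex_of_real r) (sc c x)" by (simp add: sc_sc mult.commute)
  finally show ?thesis by (simp add: sc_real)
qed

lemma cnj_mult_self: "cnj c * c = complex_of_real ((cmod c)^2)"
  using complex_norm_square[of c] by (simp only: mult.commute)

lemma norm_sc: "norm (sc c x) = cmod c * norm x"
proof -
  define k where "k = (cmod c)^2"
  define n where "n = (norm x)^2"
  have ck: "cnj c * c = complex_of_real k" unfolding k_def by (rule cnj_mult_self)
  have cn: "ci x x = complex_of_real n" unfolding n_def by (rule ci_self)
  have "ci (sc c x) (sc c x) = (cnj c * c) * ci x x"
    by (simp add: ci_sc_left ci_sc_right mult.assoc)
  also have "\<dots> = complex_of_real (k * n)" by (simp add: ck cn)
  finally have "(norm (sc c x))^2 = k * n" by (simp only: ci_self of_real_eq_iff)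
  also have "\<dots> = (cmod c * norm x)^2" by (simp add: k_def n_def power_mult_distrib)
  finally show ?thesis by (simp add: power2_eq_iff_nonneg)
qed

lemma bl_sc: "bounded_linear (sc c)"
  by (rule bounded_linear_intro[where K="cmod c"]) (auto simp: sc_add_right sc_scaleR norm_sc mult.commute)

lemma cauchy_schwarz: "cmod (ci x y) \<le> norm x * norm y"
proof (cases "x = 0")
  case True thus ?thesis by (simp add: ci_zero_left)
next
  case False
  define n where "n = (norm x)^2"
  define m where "m = (norm y)^2"
  define a where "a = ci x y"
  define k where "k = (cmod a)^2"
  define N where "N = complex_of_real n"
  have n0: "0 < n" using False by (simp add: n_def)
  have cx: "ci x x = N" unfolding N_def n_def by (rule ci_self)
  have cy: "ci y y = complex_of_real m" unfolding m_def by (rule ci_self)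
  have cyx: "ci y x = cnj a" unfolding a_def by (rule ci_sym)
  have cN: "cnj N = N" by (simp add: N_def)
  have ak: "cnj a * a = complex_of_real k" unfolding k_def by (rule cnj_mult_self)
  define v where "v = sc N y - sc a x"
  have "ci v v = cnj N * N * ci y y - cnj N * a * ci y x - cnj a * N * ci x y + cnj a * a * ci x x"
    unfolding v_def
    by (simp add: ci_diff_left ci_diff_right ci_sc_left ci_sc_right algebra_simps)
  also have "\<dots> = N * (N * ci y y - cnj a * a)"
    by (simp add: cN cyx cx a_def[symmetric] algebra_simps)
  also have "\<dots> = complex_of_real (n * (n * m - k))"
    by (simp add: N_def cy ak)
  finally have "(norm v)^2 = n * (n * m - k)"
    by (simp only: ci_self of_real_eq_iff)
  hence "0 \<le> n * (n * m - k)" by (metis zero_le_power2)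
  hence "k \<le> n * m" using n0 by (simp add: zero_le_mult_iff)
  hence "(cmod a)^2 \<le> (norm x * norm y)^2" by (simp add: k_def n_def m_def power_mult_distrib)
  thus ?thesis unfolding a_def by (rule power2_le_imp_le) simp
qed

lemma parallelogram: fixes u v :: 'h shows "(norm (u + v))^2 + (norm (u - v))^2 = 2 * (norm u)^2 + 2 * (norm v)^2"
proof -
  have "ci (u + v) (u + v) + ci (u - v) (u - v) = 2 * ci u u + 2 * ci v v"
    by (simp add: ci_add_left ci_add_right ci_diff_left ci_diff_right algebra_simps)
  from arg_cong[OF this, of Re] show ?thesis by (simp add: ci_self_Re)
qed

lemma riesz_min:
  fixes \<phi> :: "'h \<Rightarrow> complex" and K :: real
  assumes add: "\<And>x y. \<phi> (x + y) = \<phi> x + \<phi> y"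
    and hom: "\<And>c x. \<phi> (sc c x) = c * \<phi> x"
    and bd: "\<And>x. cmod (\<phi> x) \<le> K * norm x"
    and ex: "\<phi> a = 1"
  shows "\<exists>z. \<phi> z = 1 \<and> (\<forall>x. \<phi> x = 1 \<longrightarrow> (norm z)^2 \<le> (norm x)^2)"
proof -
  have phR: "\<phi> (r *\<^sub>R x) = complex_of_real r * \<phi> x" for r x
    using hom[of "complex_of_real r" x] by (simp add: sc_real)
  have ph0: "\<phi> 0 = 0" using add[of 0 0] by simp
  have phd: "\<phi> (x - y) = \<phi> x - \<phi> y" for x y
    using add[of "x - y" y] by simp
  define S where "S = (\<lambda>x. (norm x)^2) ` {x. \<phi> x = 1}"
  define D where "D = Inf S"
  have Sne: "S \<noteq> {}" using ex by (auto simp: S_def)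
  have Sbd: "bdd_below S" unfolding S_def by (rule bdd_belowI[of _ 0]) auto
  have Dle: "D \<le> (norm x)^2" if "\<phi> x = 1" for x
    unfolding D_def by (rule cInf_lower[OF _ Sbd]) (use that in \<open>auto simp: S_def\<close>)
  have "\<exists>x. \<phi> x = 1 \<and> (norm x)^2 < D + inverse (real (Suc n))" for n
  proof -
    have "D < D + inverse (real (Suc n))" by simp
    then obtain s where "s \<in> S" "s < D + inverse (real (Suc n))"
      using cInf_lessD[OF Sne] unfolding D_def by blast
    thus ?thesis by (auto simp: S_def)
  qed
  then obtain X where X1: "\<And>n. \<phi> (X n) = 1" and X2: "\<And>n. (norm (X n))^2 < D + inverse (real (Suc n))"
    by metis
  have dist_bd: "(norm (X m - X n))^2 \<le> 2 * inverse (real (Suc m)) + 2 * inverse (real (Suc n))" for m n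
  proof -
    have "\<phi> ((1/2) *\<^sub>R (X m + X n)) = 1" by (simp add: phR add X1)
    hence "D \<le> (norm ((1/2) *\<^sub>R (X m + X n)))^2" by (rule Dle)
    hence "4 * D \<le> (norm (X m + X n))^2" by (simp add: power2_eq_square)
    moreover have "(norm (X m + X n))^2 + (norm (X m - X n))^2 = 2 * (norm (X m))^2 + 2 * (norm (X n))^2"
      by (rule parallelogram)
    ultimately show ?thesis using X2[of m] X2[of n] by linarith
  qed
  have cau: "Cauchy X"
  proof (rule CauchyI)
    fix e :: real assume e: "0 < e"
    obtain M where M: "4 / e^2 < real M" using reals_Archimedean2 by blast
    have "\<forall>m\<ge>M. \<forall>n\<ge>M. norm (X m - X n) < e"
    proof (intro allI impI)
      fix m n assume mn: "M \<le> m" "M \<le> n"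
      have im: "inverse (real (Suc m)) \<le> inverse (real (Suc M))" using mn by (simp add: le_imp_inverse_le)
      have inn: "inverse (real (Suc n)) \<le> inverse (real (Suc M))" using mn by (simp add: le_imp_inverse_le)
      have e2: "0 < e^2" using e by simp
      have "4 / e^2 < real (Suc M)" using M by simp
      hence "4 < real (Suc M) * e^2" using e2 by (simp add: divide_less_eq)
      hence "4 * inverse (real (Suc M)) < e^2" by (simp add: field_simps)
      hence "(norm (X m - X n))^2 < e^2" using dist_bd[of m n] im inn by linarith
      thus "norm (X m - X n) < e" using e by (simp add: power_less_imp_less_base)
    qed
    thus "\<exists>M. \<forall>m\<ge>M. \<forall>n\<ge>M. norm (X m - X n) < e" by blast
  qed
  then obtain z where z: "X \<longlonglongrightarrow> z" using Cauchy_convergent_iff convergent_def by blast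
  have "(\<lambda>n. \<phi> (X n) - \<phi> z) \<longlonglongrightarrow> 0"
  proof (rule Lim_null_comparison)
    show "\<forall>\<^sub>F n in sequentially. norm (\<phi> (X n) - \<phi> z) \<le> K * norm (X n - z)"
      using bd by (simp add: phd[symmetric])
    have "(\<lambda>n. X n - z) \<longlonglongrightarrow> 0" using z by (simp add: LIM_zero_iff)
    hence "(\<lambda>n. norm (X n - z)) \<longlonglongrightarrow> 0" by (simp add: tendsto_norm_zero_iff)
    thus "(\<lambda>n. K * norm (X n - z)) \<longlonglongrightarrow> 0" by (rule tendsto_mult_right_zero)
  qed
  hence "(\<lambda>n. 1 - \<phi> z) \<longlonglongrightarrow> 0" by (simp add: X1)
  hence pz: "\<phi> z = 1" by (simp add: LIMSEQ_const_iff)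
  have "(norm z)^2 \<le> (norm x)^2" if x: "\<phi> x = 1" for x
  proof (rule LIMSEQ_le)
    show "(\<lambda>n. (norm (X n))^2) \<longlonglongrightarrow> (norm z)^2" using z by (intro tendsto_intros)
    show "(\<lambda>n. (norm x)^2 + inverse (real (Suc n))) \<longlonglongrightarrow> (norm x)^2"
      using tendsto_add[OF tendsto_const LIMSEQ_inverse_real_of_nat, of "(norm x)^2"] by simp
    show "\<exists>N. \<forall>n\<ge>N. (norm (X n))^2 \<le> (norm x)^2 + inverse (real (Suc n))"
    proof (intro exI allI impI)
      fix n :: nat
      show "(norm (X n))^2 \<le> (norm x)^2 + inverse (real (Suc n))" using X2[of n] Dle[OF x] by linarith
    qed
  qed
  hence "(norm z)^2 \<le> (norm x)^2" if "\<phi> x = 1" for x using that by simp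
  thus ?thesis using pz by blast
qed

lemma riesz:
  fixes \<phi> :: "'h \<Rightarrow> complex" and K :: real
  assumes add: "\<And>x y. \<phi> (x + y) = \<phi> x + \<phi> y"
    and hom: "\<And>c x. \<phi> (sc c x) = c * \<phi> x"
    and bd: "\<And>x. cmod (\<phi> x) \<le> K * norm x"
  shows "\<exists>v. \<forall>x. \<phi> x = ci v x"
proof (cases "\<forall>x. \<phi> x = 0")
  case True
  have "\<forall>x. \<phi> x = ci 0 x" using True by (simp add: ci_zero_left)
  thus ?thesis by blast
next
  case False
  then obtain a0 where a0: "\<phi> a0 \<noteq> 0" by blast
  have ph0: "\<phi> 0 = 0" using add[of 0 0] by simp
  have phd: "\<phi> (x - y) = \<phi> x - \<phi> y" for x y
    using add[of "x - y" y] by simp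
  have "\<phi> (sc (inverse (\<phi> a0)) a0) = 1" using a0 by (simp add: hom)
  from riesz_min[OF add hom bd this] obtain z where pz: "\<phi> z = 1"
    and zmin: "\<And>x. \<phi> x = 1 \<Longrightarrow> (norm z)^2 \<le> (norm x)^2" by blast
  have orth: "ci z w = 0" if w: "\<phi> w = 0" for w
  proof (rule ccontr)
    assume b0: "ci z w \<noteq> 0"
    define b where "b = ci z w"
    define k where "k = (cmod b)^2"
    define W where "W = (norm w)^2"
    define Z where "Z = (norm z)^2"
    define s where "s = inverse (W + 1)"
    have W0: "0 \<le> W" by (simp add: W_def)
    have s0: "0 < s" using W0 by (simp add: s_def)
    have sW: "s * W < 1" using W0 by (simp add: s_def field_simps)
    have k0: "0 < k" using b0 by (simp add: k_def b_def)
    define t where "t = complex_of_real s * cnj b"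
    define x where "x = z - sc t w"
    have px: "\<phi> x = 1" by (simp add: x_def phd hom w pz)
    have bk: "cnj b * b = complex_of_real k" unfolding k_def by (rule cnj_mult_self)
    have cw: "ci w w = complex_of_real W" unfolding W_def by (rule ci_self)
    have cz: "ci z z = complex_of_real Z" unfolding Z_def by (rule ci_self)
    have cwz: "ci w z = cnj b" unfolding b_def by (rule ci_sym)
    have "ci x x = ci z z - t * ci z w - cnj t * ci w z + cnj t * t * ci w w"
      unfolding x_def by (simp add: ci_diff_left ci_diff_right ci_sc_left ci_sc_right algebra_simps)
    also have "\<dots> = ci z z - complex_of_real s * (cnj b * b) - complex_of_real s * (cnj b * b)
        + complex_of_real s * complex_of_real s * (cnj b * b) * ci w w"
      by (simp add: t_def cwz b_def[symmetric] algebra_simps)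
    also have "\<dots> = complex_of_real (Z - 2 * s * k + s * s * k * W)"
      by (simp add: bk cw cz)
    finally have "(norm x)^2 = Z - 2 * s * k + s * s * k * W"
      by (simp only: ci_self of_real_eq_iff)
    moreover have "Z \<le> (norm x)^2" unfolding Z_def by (rule zmin[OF px])
    ultimately have "0 \<le> s * k * (s * W - 2)" by (simp add: algebra_simps)
    moreover have "s * k * (s * W - 2) < 0"
      using s0 k0 sW by (intro mult_pos_neg) simp_all
    ultimately show False by simp
  qed
  have zz: "ci z z \<noteq> 0"
  proof
    assume "ci z z = 0"
    hence "z = 0" by (rule ci_self_eq0)
    thus False using pz ph0 by simp
  qed
  define v where "v = sc (inverse (cnj (ci z z))) z"
  have "\<phi> x = ci v x" for x
  proof -
    have "\<phi> (x - sc (\<phi> x) z) = 0" by (simp add: phd hom pz)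
    hence "ci z (x - sc (\<phi> x) z) = 0" by (rule orth)
    hence "ci z x = \<phi> x * ci z z" by (simp add: ci_diff_right ci_sc_right)
    thus ?thesis using zz by (simp add: v_def ci_sc_left)
  qed
  thus ?thesis by blast
qed

lemma adjoint_ex:
  assumes T: "bounded_op sc T"
  shows "\<forall>x y. ci (T x) y = ci x (adjoint_op ci T y)"
proof -
  have bl: "bounded_linear T" and Tsc: "\<And>c x. T (sc c x) = sc c (T x)"
    using T unfolding bounded_op_def by auto
  interpret T: bounded_linear T by (rule bl)
  obtain K where K: "\<And>x. norm (T x) \<le> norm x * K" using T.bounded by blast
  have "\<exists>v. \<forall>x. ci y (T x) = ci v x" for y
  proof (rule riesz[where K="norm y * K"])
    show "ci y (T (x1 + x2)) = ci y (T x1) + ci y (T x2)" for x1 x2 by (simp add: T.add ci_add_right)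
    show "ci y (T (sc c x)) = c * ci y (T x)" for c x by (simp add: Tsc ci_sc_right)
    show "cmod (ci y (T x)) \<le> norm y * K * norm x" for x
    proof -
      have "cmod (ci y (T x)) \<le> norm y * norm (T x)" by (rule cauchy_schwarz)
      also have "\<dots> \<le> norm y * (norm x * K)" using K[of x] by (simp add: mult_left_mono)
      finally show ?thesis by (simp add: mult_ac)
    qed
  qed
  then obtain S where S: "\<And>y x. ci y (T x) = ci (S y) x" by metis
  have PS: "\<forall>x y. ci (T x) y = ci x (S y)"
  proof (intro allI)
    fix x y
    show "ci (T x) y = ci x (S y)" using S[of y x] by (metis ci_sym)
  qed
  have uniq: "S' = S" if "\<forall>x y. ci (T x) y = ci x (S' y)" for S'
  proof
    fix y show "S' y = S y" by (rule ci_ext) (use that PS in auto)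
  qed
  have "adjoint_op ci T = S" unfolding adjoint_op_def
    by (rule the_equality[where P="\<lambda>S. \<forall>x y. ci (T x) y = ci x (S y)", OF PS uniq])
  thus ?thesis using PS by simp
qed

lemma adjoint_bop:
  assumes T: "bounded_op sc T"
  shows "bounded_op sc (adjoint_op ci T)"
proof -
  define A where "A = adjoint_op ci T"
  have adj: "\<And>x y. ci (T x) y = ci x (A y)" using adjoint_ex[OF T] by (simp add: A_def)
  have bl: "bounded_linear T" using T unfolding bounded_op_def by auto
  interpret T: bounded_linear T by (rule bl)
  obtain K where K: "\<And>x. norm (T x) \<le> norm x * K" and Kp: "0 < K" using T.pos_bounded by blast
  have Aadd: "A (y1 + y2) = A y1 + A y2" for y1 y2
    by (rule ci_ext) (simp add: adj[symmetric] ci_add_right)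
  have Asc: "A (sc c y) = sc c (A y)" for c y
    by (rule ci_ext) (simp add: adj[symmetric] ci_sc_right)
  have AR: "A (r *\<^sub>R y) = r *\<^sub>R A y" for r y
    using Asc[of "complex_of_real r" y] by (simp add: sc_real)
  have Abd: "norm (A y) \<le> norm y * K" for y
  proof (cases "A y = 0")
    case True thus ?thesis using Kp by simp
  next
    case False
    have "(norm (A y))^2 = Re (ci (A y) (A y))" by (simp add: ci_self_Re)
    also have "\<dots> = Re (ci (T (A y)) y)" by (simp add: adj)
    also have "\<dots> \<le> cmod (ci (T (A y)) y)" by (rule complex_Re_le_cmod)
    also have "\<dots> \<le> norm (T (A y)) * norm y" by (rule cauchy_schwarz)
    also have "\<dots> \<le> (norm (A y) * K) * norm y" using K[of "A y"] by (simp add: mult_right_mono)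
    finally have "norm (A y) * norm (A y) \<le> norm (A y) * (K * norm y)"
      by (simp add: power2_eq_square mult_ac)
    hence "norm (A y) \<le> K * norm y" using False by simp
    thus ?thesis by (simp add: mult.commute)
  qed
  have "bounded_linear A" by (rule bounded_linear_intro[OF Aadd AR Abd])
  thus ?thesis unfolding bounded_op_def A_def[symmetric] using Asc by simp
qed

lemma adj_self:
  assumes T: "bounded_op sc T"
  shows "ci x (adjoint_op ci T x) = cnj (ci x (T x))"
proof -
  have "ci x (adjoint_op ci T x) = ci (T x) x" using adjoint_ex[OF T] by simp
  also have "\<dots> = cnj (ci x (T x))" by (rule ci_sym)
  finally show ?thesis .
qed

lemma polar:
  assumes add: "\<And>x y. T (x + y) = T x + T y"
    and hom: "\<And>c x. T (sc c x) = sc c (T x)"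
    and zero: "\<And>x. ci x (T x) = 0"
  shows "T y = 0"
proof -
  have key: "ci x (T y) = 0" for x
  proof -
    have e1: "ci x (T y) + ci y (T x) = 0"
      using zero[of "x + y"] zero[of x] zero[of y] by (simp add: add ci_add_left ci_add_right add.commute)
    have "ci x (T (sc \<i> y)) + ci (sc \<i> y) (T x) = 0"
      using zero[of "x + sc \<i> y"] zero[of x] zero[of "sc \<i> y"] by (simp add: add ci_add_left ci_add_right add.commute)
    hence e2: "\<i> * ci x (T y) - \<i> * ci y (T x) = 0"
      by (simp add: hom ci_sc_left ci_sc_right)
    have "ci y (T x) = - ci x (T y)" using e1 by (simp add: add_eq_0_iff)
    hence "2 * \<i> * ci x (T y) = 0" using e2 by (simp add: algebra_simps)
    thus ?thesis by simp
  qed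
  have "ci (T y) (T y) = 0" by (rule key)
  thus ?thesis by (rule ci_self_eq0)
qed

lemma scalar_holo:
  assumes U: "open U"
    and Gbl: "\<And>z. z \<in> U \<Longrightarrow> bounded_linear (G z)"
    and hol: "op_holomorphic_on sc G U"
  shows "(\<lambda>z. ci x (G z x)) holomorphic_on U"
  unfolding holomorphic_on_def field_differentiable_def
proof
  fix z0 assume z0: "z0 \<in> U"
  obtain L where Lb: "bounded_op sc L"
    and lim: "((\<lambda>w. onorm (\<lambda>y. sc (inverse (w - z0)) (G w y - G z0 y) - L y)) \<longlongrightarrow> 0) (at z0)"
    using hol z0 unfolding op_holomorphic_on_def by blast
  define D where "D = (\<lambda>w y. sc (inverse (w - z0)) (G w y - G z0 y) - L y)"
  have Lbl: "bounded_linear L" using Lb unfolding bounded_op_def by auto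
  have Dbl: "bounded_linear (D w)" if "w \<in> U" for w
    unfolding D_def
    by (intro bounded_linear_sub bounded_linear_compose[OF bl_sc] Gbl that z0 Lbl)
  have "((\<lambda>w. (ci x (G w x) - ci x (G z0 x)) / (w - z0) - ci x (L x)) \<longlongrightarrow> 0) (at z0)"
  proof (rule Lim_null_comparison)
    show "\<forall>\<^sub>F w in at z0. norm ((ci x (G w x) - ci x (G z0 x)) / (w - z0) - ci x (L x))
        \<le> norm x * norm x * onorm (D w)"
      using eventually_at_in_open[OF U z0]
    proof (rule eventually_mono)
      fix w assume w: "w \<in> U - {z0}"
      have "(ci x (G w x) - ci x (G z0 x)) / (w - z0) - ci x (L x) = ci x (D w x)"
        by (simp add: D_def ci_diff_right ci_sc_right divide_inverse mult.commute)
      hence "norm ((ci x (G w x) - ci x (G z0 x)) / (w - z0) - ci x (L x)) \<le> norm x * norm (D w x)"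
        using cauchy_schwarz by simp
      also have "\<dots> \<le> norm x * (onorm (D w) * norm x)"
        using onorm[OF Dbl[of w]] w by (simp add: mult_left_mono)
      finally show "norm ((ci x (G w x) - ci x (G z0 x)) / (w - z0) - ci x (L x))
        \<le> norm x * norm x * onorm (D w)" by (simp add: mult_ac)
    qed
    show "((\<lambda>w. norm x * norm x * onorm (D w)) \<longlongrightarrow> 0) (at z0)"
      using lim unfolding D_def by (rule tendsto_mult_right_zero)
  qed
  hence "((\<lambda>w. (ci x (G w x) - ci x (G z0 x)) / (w - z0)) \<longlongrightarrow> ci x (L x)) (at z0)"
    by (simp add: LIM_zero_iff)
  hence "((\<lambda>w. ci x (G w x)) has_field_derivative ci x (L x)) (at z0)"
    by (simp add: has_field_derivative_iff)
  thus "\<exists>f'. ((\<lambda>w. ci x (G w x)) has_field_derivative f') (at z0 within U)"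
    by (blast intro: has_field_derivative_at_within)
qed

end

theorem theorem2:
  fixes sc :: "complex \<Rightarrow> 'h::banach \<Rightarrow> 'h"
    and ci :: "'h \<Rightarrow> 'h \<Rightarrow> complex"
    and F :: "complex \<Rightarrow> 'h \<Rightarrow> 'h"
  assumes H: "complex_hilbert sc ci"
    and sep: "separable_type TYPE('h)"
    and F_bop: "\<forall>z\<in>ball 0 1. bounded_op sc (F z)"
    and pos: "\<forall>z\<in>ball 0 1. op_le ci (\<lambda>x. 0) (re_op sc ci (F z))"
    and contr: "\<forall>z\<in>ball 0 1. op_le ci (re_op sc ci (F z)) (\<lambda>x. x)"
    and holo: "op_holomorphic_on sc (\<lambda>z x. F z x + sc z (adjoint_op ci (F z) x)) (ball 0 1)"
  shows "\<exists>C. \<forall>z\<in>ball 0 1. F z = C"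
proof -
  interpret chs sc ci by (rule chs.intro[OF H])
  define G where "G = (\<lambda>z x. F z x + sc z (adjoint_op ci (F z) x))"
  have Gbl: "bounded_linear (G z)" if z: "z \<in> ball 0 1" for z
  proof -
    have "bounded_linear (F z)" using F_bop z unfolding bounded_op_def by auto
    moreover have "bounded_linear (adjoint_op ci (F z))"
      using adjoint_bop[of "F z"] F_bop z unfolding bounded_op_def by auto
    ultimately show ?thesis unfolding G_def
      by (intro bounded_linear_add bounded_linear_compose[OF bl_sc])
  qed
  have scal: "ci x (F z x) = ci x (F 0 x)" if z: "z \<in> ball 0 1" for x z
  proof -
    define f where "f = (\<lambda>z. ci x (F z x))"
    define g where "g = (\<lambda>z. ci x (G z x))"
    have holg: "g holomorphic_on ball 0 1" unfolding g_def
      by (rule scalar_holo[OF open_ball Gbl]) (use holo in \<open>simp_all add: G_def\<close>)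
    have gf: "g w = f w + w * cnj (f w)" if w: "w \<in> ball 0 1" for w
      using adj_self[of "F w" x] F_bop w by (simp add: g_def f_def G_def ci_add_right ci_sc_right)
    have bd: "0 \<le> Re (f w) \<and> Re (f w) \<le> (norm x)^2" if w: "w \<in> ball 0 1" for w
    proof -
      have Fb: "bounded_op sc (F w)" using F_bop w by simp
      have R: "ci x (re_op sc ci (F w) x) = complex_of_real (Re (f w))"
        using adj_self[OF Fb, of x]
        by (simp add: re_op_def f_def ci_sc_right ci_add_right complex_add_cnj)
      have p1: "0 \<le> Re (ci x (re_op sc ci (F w) x - 0))"
        using pos w unfolding op_le_def positive_op_def by blast
      have p2: "0 \<le> Re (ci x (x - re_op sc ci (F w) x))"
        using contr w unfolding op_le_def positive_op_def by blast
      show ?thesis using p1 p2 R by (simp add: ci_diff_right ci_self_Re)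
    qed
    have "\<forall>w\<in>ball 0 1. f w = f 0" by (rule scalar_const[OF holg gf bd])
    hence "f z = f 0" using z by blast
    thus ?thesis by (simp only: f_def)
  qed
  have F0: "bounded_op sc (F 0)" using F_bop by simp
  have "F z = F 0" if z: "z \<in> ball 0 1" for z
  proof
    fix y
    have Fz: "bounded_op sc (F z)" using F_bop z by simp
    have blz: "bounded_linear (F z)" and bl0: "bounded_linear (F 0)"
      using Fz F0 unfolding bounded_op_def by auto
    have "(\<lambda>y. F z y - F 0 y) y = 0"
    proof (rule polar[where T="\<lambda>y. F z y - F 0 y"])
      show "F z (a + b) - F 0 (a + b) = (F z a - F 0 a) + (F z b - F 0 b)" for a b
        using bounded_linear.linear[OF blz] bounded_linear.linear[OF bl0]
        by (simp add: linear_add)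
      show "F z (sc c a) - F 0 (sc c a) = sc c (F z a - F 0 a)" for c a
        using Fz F0 unfolding bounded_op_def by (simp add: sc_diff_right)
      show "ci a (F z a - F 0 a) = 0" for a
        using scal[OF z, of a] by (simp add: ci_diff_right)
    qed
    thus "F z y = F 0 y" by simp
  qed
  thus ?thesis by blast
qed

end
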